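(* Let $P=\{p_1,p_2,p_3,p_4\}$ and $Q=\{q_1,q_2,q_3,q_4\}$ be two 4-point subsets of the Riemann sphere $\widehat{\mathbb{C}}$, each in general position (its four points do not lie on a common generalized circle). Then $P$ and $Q$ are Möbius equivalent (there is a Möbius transformation mapping $P$ onto $Q$) if and only if their shapes have the same angles.
   Context: Generalized circles are circles and straight lines (the latter completed by $\infty$) in $\widehat{\mathbb{C}}$; any three distinct points lie on exactly one. For a 4-point set $P=\{p_1,\dots,p_4\}$ in general position and each $l\in\{1,2,3,4\}$, the curvilinear triangle $T_l$ has as vertices the three points $p_i$, $i\ne l$; its side joining $p_i$ and $p_j$ ($i,j\neq l$) is the arc, with endpoints $p_i,p_j$, of the generalized circle through $p_i,p_j,p_l$ that does not contain $p_l$. Each $T_l$ is regarded as an oriented curvilinear triangle, its vertices read in the positive (counterclockwise) orientation induced by the orientation of the sphere, and its angles are the angles at its three vertices taken in this cyclic order (when one point is $\infty$, the triangle on the three finite points is an ordinary Euclidean triangle, positively oriented, and the others are bounded by an arc and two rays). The four triangles $T_1,\dots,T_4$ have the same oriented angles, and the shape of $P$ is this oriented curvilinear triangle (with its cyclically ordered angles). "The shapes have the same angles" means the cyclically ordered triples of angles of the shapes of $P$ and $Q$ coincide up to cyclic permutation. *)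

theory Defs
  imports Complex_Main
begin

text \<open>The Riemann sphere: finite points are Some z, the point at infinity is None.\<close>
type_synonym csphere = "complex option"

definition moebius_map :: "complex \<Rightarrow> complex \<Rightarrow> complex \<Rightarrow> complex \<Rightarrow> csphere \<Rightarrow> csphere" where
  "moebius_map a b c d w =
     (case w of
        None \<Rightarrow> (if c = 0 then None else Some (a / c))
      | Some z \<Rightarrow> (if c * z + d = 0 then None else Some ((a * z + b) / (c * z + d))))"

definition is_moebius :: "(csphere \<Rightarrow> csphere) \<Rightarrow> bool" where
  "is_moebius f \<longleftrightarrow> (\<exists>a b c d. a * d - b * c \<noteq> 0 \<and> f = moebius_map a b c d)"

definition moebius_equivalent :: "csphere set \<Rightarrow> csphere set \<Rightarrow> bool" where
  "moebius_equivalent P Q \<longleftrightarrow> (\<exists>f. is_moebius f \<and> f ` P = Q)"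

definition gen_circle :: "csphere set \<Rightarrow> bool" where
  "gen_circle C \<longleftrightarrow>
     (\<exists>c r. r > 0 \<and> C = Some ` {z. cmod (z - c) = r}) \<or>
     (\<exists>a d. d \<noteq> 0 \<and> C = insert None (Some ` {a + complex_of_real t * d | t. True}))"

definition general_position :: "csphere set \<Rightarrow> bool" where
  "general_position P \<longleftrightarrow> card P = 4 \<and> \<not> (\<exists>C. gen_circle C \<and> P \<subseteq> C)"

text \<open>Tangent direction (up to a positive real factor) at the finite point a of the arc,
  with endpoints a and b, of the generalized circle through a, b, c that does not contain c.
  (Obtained from the Moebius map sending a, b, c to 0, 1, \<infinity>, under which that arc becomes [0,1].)\<close>
fun arc_dir_fin :: "complex \<Rightarrow> csphere \<Rightarrow> csphere \<Rightarrow> complex" where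
  "arc_dir_fin a (Some b) (Some c) = (a - c) * (b - a) / (b - c)"
| "arc_dir_fin a (Some b) None = b - a"
| "arc_dir_fin a None (Some c) = a - c"
| "arc_dir_fin a None None = 0"

text \<open>The chart w = 1/z at infinity (holomorphic, hence orientation preserving).\<close>
fun inv_chart :: "csphere \<Rightarrow> csphere" where
  "inv_chart None = Some 0"
| "inv_chart (Some z) = (if z = 0 then None else Some (1 / z))"

text \<open>Tangent direction at vertex a (in the standard chart at a: identity if a is finite,
  1/z if a = \<infinity>) of the arc from a to b of the generalized circle through a, b, c avoiding c.\<close>
fun arc_dir :: "csphere \<Rightarrow> csphere \<Rightarrow> csphere \<Rightarrow> complex" where
  "arc_dir (Some a) b c = arc_dir_fin a b c"
| "arc_dir None b c = arc_dir_fin 0 (inv_chart b) (inv_chart c)"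

text \<open>Signed angle at vertex a of the curvilinear triangle T_l (vertices a, b, c, l the omitted
  point), measured from the side a-b to the side a-c.  It lies in (0, pi) iff (a, b, c) is the
  positive (counterclockwise) orientation of T_l.\<close>
definition signed_vertex_angle :: "csphere \<Rightarrow> csphere \<Rightarrow> csphere \<Rightarrow> csphere \<Rightarrow> real" where
  "signed_vertex_angle l a b c = Arg (arc_dir a c l / arc_dir a b l)"

definition vertex_angle :: "csphere \<Rightarrow> csphere \<Rightarrow> csphere \<Rightarrow> csphere \<Rightarrow> real" where
  "vertex_angle l a b c = \<bar>signed_vertex_angle l a b c\<bar>"

text \<open>The angles of the oriented triangle T_l of P, as the set of all cyclic readings of its
  angle triple in positive orientation (so two such sets are equal iff the cyclically ordered
  triples coincide up to cyclic permutation).\<close>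
definition triangle_angles :: "csphere set \<Rightarrow> csphere \<Rightarrow> (real \<times> real \<times> real) set" where
  "triangle_angles P l =
     {(vertex_angle l a b c, vertex_angle l b c a, vertex_angle l c a b) | a b c.
        P - {l} = {a, b, c} \<and> distinct [a, b, c] \<and> 0 < signed_vertex_angle l a b c}"

text \<open>The shapes of P and Q have the same angles (the four triangles T_l of a set all have the
  same oriented angles, so we compare every T_l of P with every T_l' of Q).\<close>
definition same_shape_angles :: "csphere set \<Rightarrow> csphere set \<Rightarrow> bool" where
  "same_shape_angles P Q \<longleftrightarrow> (\<forall>l\<in>P. \<forall>l'\<in>Q. triangle_angles P l = triangle_angles Q l')"

end

theory Submission
  imports Defs
begin


fun hom :: "csphere \<Rightarrow> complex \<times> complex" where
  "hom None = (1, 0)"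
| "hom (Some z) = (z, 1)"

definition dt :: "complex \<times> complex \<Rightarrow> complex \<times> complex \<Rightarrow> complex" where
  "dt x y = fst x * snd y - snd x * fst y"

definition XR :: "csphere \<Rightarrow> csphere \<Rightarrow> csphere \<Rightarrow> csphere \<Rightarrow> complex" where
  "XR a b c l = dt (hom c) (hom a) * dt (hom b) (hom l) / (dt (hom c) (hom l) * dt (hom b) (hom a))"

lemma dt_hom_eq0: "dt (hom p) (hom q) = 0 \<longleftrightarrow> p = q"
  by (cases p; cases q) (auto simp: dt_def)

lemma arc_ratio:
  assumes "distinct [l, a, b, c]"
  shows "arc_dir a c l / arc_dir a b l = XR a b c l"
proof (cases a)
  case None
  then show ?thesis using assms
    apply (cases b; cases c; cases l)
    apply (auto simp: XR_def dt_def)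
    apply (auto simp: field_simps diff_eq_eq[symmetric] eq_commute[of _ "_ - _"] dest!: sym[of 0])
    done
next
  case (Some a')
  then show ?thesis using assms
    apply (cases b; cases c; cases l)
    apply (auto simp: XR_def dt_def)
    apply (auto simp: field_simps diff_eq_eq[symmetric] eq_commute[of _ "_ - _"]  dest!: sym[of 0])
    done
qed


definition proj :: "complex \<times> complex \<Rightarrow> csphere" where
  "proj v = (if snd v = 0 then None else Some (fst v / snd v))"

definition mv :: "complex \<Rightarrow> complex \<Rightarrow> complex \<Rightarrow> complex \<Rightarrow> complex \<times> complex \<Rightarrow> complex \<times> complex" where
  "mv A B C D x = (A * fst x + B * snd x, C * fst x + D * snd x)"

lemma mm_proj: "moebius_map A B C D p = proj (mv A B C D (hom p))"
  by (cases p) (auto simp: moebius_map_def proj_def mv_def)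

lemma hom_nz: "hom p \<noteq> (0, 0)"
  by (cases p) auto

lemma dt_mv: "dt (mv A B C D x) (mv A B C D y) = (A * D - B * C) * dt x y"
  by (simp add: dt_def mv_def algebra_simps)

lemma mv_nz:
  assumes "A * D - B * C \<noteq> 0" "x \<noteq> (0, 0)"
  shows "mv A B C D x \<noteq> (0, 0)"
proof
  assume h: "mv A B C D x = (0, 0)"
  have "\<And>y. dt x y = 0"
  proof -
    fix y
    have "(A * D - B * C) * dt x y = 0"
      using dt_mv[of A B C D x y] h by (simp add: dt_def)
    then show "dt x y = 0" using assms(1) by simp
  qed
  from this[of "(1,0)"] this[of "(0,1)"] have "x = (0, 0)"
    by (cases x) (simp add: dt_def)
  with assms(2) show False by simp
qed

lemma hom_proj:
  assumes "v \<noteq> (0, 0)"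
  shows "\<exists>s. s \<noteq> 0 \<and> hom (proj v) = (s * fst v, s * snd v)"
proof (cases "snd v = 0")
  case True
  then have "fst v \<noteq> 0" using assms by (cases v) auto
  then show ?thesis using True
    by (intro exI[of _ "1 / fst v"]) (auto simp: proj_def)
next
  case False
  then show ?thesis
    by (intro exI[of _ "1 / snd v"]) (auto simp: proj_def)
qed

lemma hom_mm:
  assumes "A * D - B * C \<noteq> 0"
  shows "\<exists>s. s \<noteq> 0 \<and> hom (moebius_map A B C D p) =
     (s * fst (mv A B C D (hom p)), s * snd (mv A B C D (hom p)))"
  unfolding mm_proj by (rule hom_proj[OF mv_nz[OF assms hom_nz]])

lemma dt_scale: "dt (s * fst x, s * snd x) (t * fst y, t * snd y) = s * t * dt x y"
  by (simp add: dt_def algebra_simps)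

lemma moeb_scalars:
  assumes "is_moebius f"
  obtains A B C D sc where "A * D - B * C \<noteq> 0" "\<And>p. sc p \<noteq> 0"
    "\<And>p q. dt (hom (f p)) (hom (f q)) = sc p * sc q * (A * D - B * C) * dt (hom p) (hom q)"
proof -
  obtain A B C D where det: "A * D - B * C \<noteq> 0" and f: "f = moebius_map A B C D"
    using assms unfolding is_moebius_def by blast
  have "\<forall>p. \<exists>s. s \<noteq> 0 \<and> hom (f p) = (s * fst (mv A B C D (hom p)), s * snd (mv A B C D (hom p)))"
    using hom_mm[OF det] f by blast
  then obtain sc where sc: "\<And>p. sc p \<noteq> 0"
    "\<And>p. hom (f p) = (sc p * fst (mv A B C D (hom p)), sc p * snd (mv A B C D (hom p)))"
    by metis
  have "dt (hom (f p)) (hom (f q)) = sc p * sc q * (A * D - B * C) * dt (hom p) (hom q)" for p q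
    unfolding sc(2) dt_scale dt_mv by simp
  then show ?thesis using that det sc(1) by blast
qed

lemma XR_moeb:
  assumes "is_moebius f"
  shows "XR (f a) (f b) (f c) (f l) = XR a b c l"
proof -
  obtain A B C D sc where det: "A * D - B * C \<noteq> 0" and sc: "\<And>p. sc p \<noteq> 0"
    and h: "\<And>p q. dt (hom (f p)) (hom (f q)) = sc p * sc q * (A * D - B * C) * dt (hom p) (hom q)"
    using moeb_scalars[OF assms] by metis
  have e: "sc c * sc a * sc b * sc l * (A * D - B * C) * (A * D - B * C) \<noteq> 0"
    using det sc by simp
  show ?thesis unfolding XR_def h
    using e by (simp add: mult_ac)
qed

lemma moeb_inj:
  assumes "is_moebius f"
  shows "inj f"
proof (rule injI)
  fix p q assume "f p = f q"
  obtain A B C D sc where det: "A * D - B * C \<noteq> 0" and sc: "\<And>p. sc p \<noteq> 0"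
    and h: "\<And>p q. dt (hom (f p)) (hom (f q)) = sc p * sc q * (A * D - B * C) * dt (hom p) (hom q)"
    using moeb_scalars[OF assms] by metis
  have "dt (hom (f p)) (hom (f q)) = 0" using \<open>f p = f q\<close> dt_hom_eq0 by simp
  then have "dt (hom p) (hom q) = 0" using h[of p q] det sc by simp
  then show "p = q" using dt_hom_eq0 by simp
qed

lemma proj_scale: "s \<noteq> 0 \<Longrightarrow> proj (s * fst v, s * snd v) = proj v"
  by (auto simp: proj_def)

lemma mv_scale: "mv A B C D (s * fst v, s * snd v) = (s * fst (mv A B C D v), s * snd (mv A B C D v))"
  by (simp add: mv_def algebra_simps)

lemma mm_comp:
  assumes "A' * D' - B' * C' \<noteq> 0"
  shows "moebius_map A B C D (moebius_map A' B' C' D' p) =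
    moebius_map (A*A'+B*C') (A*B'+B*D') (C*A'+D*C') (C*B'+D*D') p"
proof -
  obtain s where s: "s \<noteq> 0" "hom (moebius_map A' B' C' D' p) =
     (s * fst (mv A' B' C' D' (hom p)), s * snd (mv A' B' C' D' (hom p)))"
    using hom_mm[OF assms] by blast
  show ?thesis
    unfolding mm_proj[of A B C D] s(2) mv_scale proj_scale[OF s(1)]
    by (simp add: mm_proj mv_def algebra_simps)
qed

lemma mm_id: "k \<noteq> 0 \<Longrightarrow> moebius_map k 0 0 k p = p"
  by (cases p) (auto simp: moebius_map_def)

lemma normalize3:
  assumes "distinct [p, q, r]"
  shows "\<exists>A B C D. A * D - B * C \<noteq> 0 \<and> moebius_map A B C D p = Some 0 \<and>
     moebius_map A B C D q = Some 1 \<and> moebius_map A B C D r = None"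
proof -
  define A where "A = dt (hom q) (hom r) * snd (hom p)"
  define B where "B = - dt (hom q) (hom r) * fst (hom p)"
  define C where "C = dt (hom q) (hom p) * snd (hom r)"
  define D where "D = - dt (hom q) (hom p) * fst (hom r)"
  have mvx: "mv A B C D (hom x) = (dt (hom q) (hom r) * dt (hom x) (hom p), dt (hom q) (hom p) * dt (hom x) (hom r))" for x
    by (simp add: A_def B_def C_def D_def mv_def dt_def algebra_simps)
  have nz: "dt (hom x) (hom y) \<noteq> 0" if "x \<noteq> y" for x y using that dt_hom_eq0 by simp
  have det: "A * D - B * C = dt (hom q) (hom r) * dt (hom q) (hom p) * dt (hom p) (hom r)"
    by (simp add: A_def B_def C_def D_def dt_def algebra_simps)
  have dpq: "dt (hom q) (hom p) = - dt (hom p) (hom q)" for p q by (simp add: dt_def)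
  show ?thesis
    apply (rule exI[of _ A], rule exI[of _ B], rule exI[of _ C], rule exI[of _ D])
    using assms nz[of q r] nz[of q p] nz[of p r] nz[of r p] nz[of p q]
    by (auto simp: det mm_proj mvx proj_def dt_hom_eq0)
qed

lemma XR_01inf: "XR (Some 0) (Some 1) None (Some z) = 1 - z"
  by (simp add: XR_def dt_def)

lemma moeb_exists:
  assumes d1: "distinct [l, a, b, c]" and d2: "distinct [l', a', b', c']"
    and eq: "XR a b c l = XR a' b' c' l'"
  shows "\<exists>f. is_moebius f \<and> f a = a' \<and> f b = b' \<and> f c = c' \<and> f l = l'"
proof -
  obtain A B C D where N: "A * D - B * C \<noteq> 0" "moebius_map A B C D a = Some 0"
     "moebius_map A B C D b = Some 1" "moebius_map A B C D c = None"
    using normalize3[of a b c] d1 by auto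
  obtain A' B' C' D' where N': "A' * D' - B' * C' \<noteq> 0" "moebius_map A' B' C' D' a' = Some 0"
     "moebius_map A' B' C' D' b' = Some 1" "moebius_map A' B' C' D' c' = None"
    using normalize3[of a' b' c'] d2 by auto
  let ?T = "moebius_map A B C D" and ?T' = "moebius_map A' B' C' D'"
  have mT: "is_moebius ?T" using N(1) unfolding is_moebius_def by blast
  have mT': "is_moebius ?T'" using N'(1) unfolding is_moebius_def by blast
  have "?T l \<noteq> None" using N(4) d1 inj_eq[OF moeb_inj[OF mT], of l c] by auto
  then obtain z where z: "?T l = Some z" by auto
  have "?T' l' \<noteq> None" using N'(4) d2 inj_eq[OF moeb_inj[OF mT'], of l' c'] by auto
  then obtain z' where z': "?T' l' = Some z'" by auto
  have "1 - z = 1 - z'"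
    using XR_moeb[OF mT, of a b c l] XR_moeb[OF mT', of a' b' c' l'] eq N N' z z'
    by (simp add: XR_01inf)
  then have Tl: "?T l = ?T' l'" using z z' by simp
  let ?S = "moebius_map D' (- B') (- C') A'"
  have inv: "?S (?T' x) = x" for x
    using N'(1) by (simp add: mm_comp algebra_simps mm_id[of "A' * D' - B' * C'", simplified algebra_simps])
  define f where "f = (\<lambda>x. ?S (?T x))"
  have f: "f = moebius_map (D' * A + - B' * C) (D' * B + - B' * D) (- C' * A + A' * C) (- C' * B + A' * D)"
    unfolding f_def using N(1) by (simp add: mm_comp fun_eq_iff)
  have "(D' * A + - B' * C) * (- C' * B + A' * D) - (D' * B + - B' * D) * (- C' * A + A' * C)
     = (A' * D' - B' * C') * (A * D - B * C)" (is "?L = _") by (simp add: algebra_simps)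
  then have "?L \<noteq> 0" using N(1) N'(1) by simp
  then have "is_moebius f" unfolding f is_moebius_def by blast
  moreover have "f a = a'" "f b = b'" "f c = c'" "f l = l'"
    unfolding f_def using N N' Tl inv by (metis)+
  ultimately show ?thesis by blast
qed



definition TA :: "csphere set \<Rightarrow> csphere \<Rightarrow> (real \<times> real \<times> real) set" where
  "TA P l = {(\<bar>Arg (XR a b c l)\<bar>, \<bar>Arg (XR b c a l)\<bar>, \<bar>Arg (XR c a b l)\<bar>) | a b c.
     P - {l} = {a, b, c} \<and> distinct [a, b, c] \<and> 0 < Arg (XR a b c l)}"

lemma sva: "distinct [l, a, b, c] \<Longrightarrow> signed_vertex_angle l a b c = Arg (XR a b c l)"
  by (simp add: signed_vertex_angle_def arc_ratio)

lemma tri_TA: "triangle_angles P l = TA P l"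
proof -
  have eqs: "vertex_angle l a b c = \<bar>Arg (XR a b c l)\<bar> \<and> vertex_angle l b c a = \<bar>Arg (XR b c a l)\<bar>
      \<and> vertex_angle l c a b = \<bar>Arg (XR c a b l)\<bar> \<and> signed_vertex_angle l a b c = Arg (XR a b c l)"
    if "P - {l} = {a, b, c}" "distinct [a, b, c]" for a b c
  proof -
    have "l \<notin> {a, b, c}" using that(1) by blast
    then show ?thesis using that(2) by (auto simp: vertex_angle_def sva)
  qed
  show ?thesis
  proof (rule set_eqI, rule iffI)
    fix x assume "x \<in> triangle_angles P l"
    then obtain a b c where x: "x = (vertex_angle l a b c, vertex_angle l b c a, vertex_angle l c a b)"
      and P: "P - {l} = {a, b, c}" and d: "distinct [a, b, c]" and pos: "0 < signed_vertex_angle l a b c"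
      unfolding triangle_angles_def by blast
    note e = eqs[OF P d]
    have "x = (\<bar>Arg (XR a b c l)\<bar>, \<bar>Arg (XR b c a l)\<bar>, \<bar>Arg (XR c a b l)\<bar>)" using x e by simp
    moreover have "0 < Arg (XR a b c l)" using pos e by simp
    ultimately show "x \<in> TA P l" unfolding TA_def using P d by blast
  next
    fix x assume "x \<in> TA P l"
    then obtain a b c where x: "x = (\<bar>Arg (XR a b c l)\<bar>, \<bar>Arg (XR b c a l)\<bar>, \<bar>Arg (XR c a b l)\<bar>)"
      and P: "P - {l} = {a, b, c}" and d: "distinct [a, b, c]" and pos: "0 < Arg (XR a b c l)"
      unfolding TA_def by blast
    note e = eqs[OF P d]
    have "x = (vertex_angle l a b c, vertex_angle l b c a, vertex_angle l c a b)" using x e by simp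
    moreover have "0 < signed_vertex_angle l a b c" using pos e by simp
    ultimately show "x \<in> triangle_angles P l" unfolding triangle_angles_def using P d by blast
  qed
qed

lemma frac_eq: "(N1::complex) = N2 \<Longrightarrow> D1 = D2 \<Longrightarrow> N1 / D1 = N2 / D2" by simp

lemma K_a: "XR l c b a = XR a b c l \<and> XR c b l a = XR b c a l \<and> XR b l c a = XR c a b l"
  unfolding XR_def
  apply (intro conjI; rule frac_eq)
  apply (simp_all only: dt_def)
  apply (simp_all add: algebra_simps)
  done
lemma K_b: "XR c l a b = XR a b c l \<and> XR l a c b = XR b c a l \<and> XR a c l b = XR c a b l"
  unfolding XR_def
  apply (intro conjI; rule frac_eq)
  apply (simp_all only: dt_def)
  apply (simp_all add: algebra_simps)
  done
lemma K_c: "XR b a l c = XR a b c l \<and> XR a l b c = XR b c a l \<and> XR l b a c = XR c a b l"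
  unfolding XR_def
  apply (intro conjI; rule frac_eq)
  apply (simp_all only: dt_def)
  apply (simp_all add: algebra_simps)
  done

lemma TA_sub:
  assumes "l \<in> P" "m \<in> P"
  shows "TA P l \<subseteq> TA P m"
proof
  fix x assume "x \<in> TA P l"
  then obtain a b c where x: "x = (\<bar>Arg (XR a b c l)\<bar>, \<bar>Arg (XR b c a l)\<bar>, \<bar>Arg (XR c a b l)\<bar>)"
    and P: "P - {l} = {a, b, c}" and d: "distinct [a, b, c]" and pos: "0 < Arg (XR a b c l)"
    unfolding TA_def by blast
  have lnot: "l \<notin> {a, b, c}" using P by blast
  have Pe: "P = {l, a, b, c}" using P assms(1) by blast
  consider "m = l" | "m = a" | "m = b" | "m = c" using assms(2) Pe by blast
  then show "x \<in> TA P m"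
  proof cases
    case 1 then show ?thesis using \<open>x \<in> TA P l\<close> by simp
  next
    case 2
    have "P - {m} = {l, c, b}" using Pe 2 lnot d by auto
    moreover have "distinct [l, c, b]" using d lnot by auto
    moreover have "x = (\<bar>Arg (XR l c b m)\<bar>, \<bar>Arg (XR c b l m)\<bar>, \<bar>Arg (XR b l c m)\<bar>)"
      using x K_a[of l c b a] 2 by simp
    moreover have "0 < Arg (XR l c b m)" using pos K_a[of l c b a] 2 by simp
    ultimately show ?thesis unfolding TA_def by blast
  next
    case 3
    have "P - {m} = {c, l, a}" using Pe 3 lnot d by auto
    moreover have "distinct [c, l, a]" using d lnot by auto
    moreover have "x = (\<bar>Arg (XR c l a m)\<bar>, \<bar>Arg (XR l a c m)\<bar>, \<bar>Arg (XR a c l m)\<bar>)"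
      using x K_b[of c l a b] 3 by simp
    moreover have "0 < Arg (XR c l a m)" using pos K_b[of c l a b] 3 by simp
    ultimately show ?thesis unfolding TA_def by blast
  next
    case 4
    have "P - {m} = {b, a, l}" using Pe 4 lnot d by auto
    moreover have "distinct [b, a, l]" using d lnot by auto
    moreover have "x = (\<bar>Arg (XR b a l m)\<bar>, \<bar>Arg (XR a l b m)\<bar>, \<bar>Arg (XR l b a m)\<bar>)"
      using x K_c[of b a l c] 4 by simp
    moreover have "0 < Arg (XR b a l m)" using pos K_c[of b a l c] 4 by simp
    ultimately show ?thesis unfolding TA_def by blast
  qed
qed

lemma TA_indep: "l \<in> P \<Longrightarrow> m \<in> P \<Longrightarrow> TA P l = TA P m"
  using TA_sub by blast

lemma TA_moeb:
  assumes f: "is_moebius f"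
  shows "TA (f ` P) (f l) = TA P l"
proof -
  have inj: "inj f" using moeb_inj[OF f] .
  have img: "f ` P - {f l} = f ` (P - {l})" using inj by (simp add: image_set_diff)
  show ?thesis
  proof
    show "TA P l \<subseteq> TA (f ` P) (f l)"
    proof
      fix x assume "x \<in> TA P l"
      then obtain a b c where x: "x = (\<bar>Arg (XR a b c l)\<bar>, \<bar>Arg (XR b c a l)\<bar>, \<bar>Arg (XR c a b l)\<bar>)"
        and P: "P - {l} = {a, b, c}" and d: "distinct [a, b, c]" and pos: "0 < Arg (XR a b c l)"
        unfolding TA_def by blast
      have "f ` P - {f l} = {f a, f b, f c}" using img P by simp
      moreover have "distinct [f a, f b, f c]" using d inj by (auto simp: inj_eq)
      moreover have "x = (\<bar>Arg (XR (f a) (f b) (f c) (f l))\<bar>, \<bar>Arg (XR (f b) (f c) (f a) (f l))\<bar>, \<bar>Arg (XR (f c) (f a) (f b) (f l))\<bar>)"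
        using x XR_moeb[OF f, of a b c l] XR_moeb[OF f, of b c a l] XR_moeb[OF f, of c a b l] by simp
      moreover have "0 < Arg (XR (f a) (f b) (f c) (f l))" using pos XR_moeb[OF f, of a b c l] by simp
      ultimately show "x \<in> TA (f ` P) (f l)"
        unfolding TA_def by blast
    qed
  next
    show "TA (f ` P) (f l) \<subseteq> TA P l"
    proof
      fix x assume "x \<in> TA (f ` P) (f l)"
      then obtain a' b' c' where x: "x = (\<bar>Arg (XR a' b' c' (f l))\<bar>, \<bar>Arg (XR b' c' a' (f l))\<bar>, \<bar>Arg (XR c' a' b' (f l))\<bar>)"
        and P: "f ` P - {f l} = {a', b', c'}" and d: "distinct [a', b', c']" and pos: "0 < Arg (XR a' b' c' (f l))"
        unfolding TA_def by blast
      have "a' \<in> f ` P" "b' \<in> f ` P" "c' \<in> f ` P" using P by auto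
      then obtain a b c where abc: "a' = f a" "b' = f b" "c' = f c" by (meson imageE)
      have "f ` (P - {l}) = f ` {a, b, c}" using img P abc by simp
      then have P2: "P - {l} = {a, b, c}" using inj by (metis inj_image_eq_iff)
      have "distinct [a, b, c]" using d abc by auto
      moreover have "x = (\<bar>Arg (XR a b c l)\<bar>, \<bar>Arg (XR b c a l)\<bar>, \<bar>Arg (XR c a b l)\<bar>)"
        using x abc XR_moeb[OF f, of a b c l] XR_moeb[OF f, of b c a l] XR_moeb[OF f, of c a b l] by simp
      moreover have "0 < Arg (XR a b c l)" using pos abc XR_moeb[OF f, of a b c l] by simp
      ultimately show "x \<in> TA P l"
        unfolding TA_def using P2 by blast
    qed
  qed
qed

lemma dir1:
  assumes "moebius_equivalent P Q"
  shows "same_shape_angles P Q"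
proof -
  obtain f where f: "is_moebius f" "f ` P = Q" using assms unfolding moebius_equivalent_def by blast
  show ?thesis unfolding same_shape_angles_def tri_TA
  proof (intro ballI)
    fix l l' assume "l \<in> P" "l' \<in> Q"
    have "TA P l = TA Q (f l)" using TA_moeb[OF f(1), of P l] f(2) by simp
    also have "\<dots> = TA Q l'"
    proof (rule TA_indep)
      show "f l \<in> Q" using \<open>l \<in> P\<close> f(2) by blast
      show "l' \<in> Q" by fact
    qed
    finally show "TA P l = TA Q l'" .
  qed
qed

lemma Arg_pos_iff:
  assumes "Im z \<noteq> 0"
  shows "0 < Arg z \<longleftrightarrow> 0 < Im z"
proof -
  have z: "z \<noteq> 0" using assms by auto
  have s: "sin (Arg z) = Im z / cmod z" using sin_Arg[OF z] .
  have n: "cmod z > 0" using z by simp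
  have b: "- pi < Arg z" "Arg z \<le> pi" using Arg_bounded by auto
  show ?thesis
  proof
    assume "0 < Arg z"
    then have "0 \<le> sin (Arg z)" using sin_ge_zero b by simp
    then show "0 < Im z" using s n assms by (smt (verit) divide_neg_pos)
  next
    assume "0 < Im z"
    then have "0 < sin (Arg z)" using s n by simp
    moreover have "Arg z \<le> 0 \<Longrightarrow> sin (Arg z) \<le> 0"
      using sin_ge_zero[of "- Arg z"] b by simp
    ultimately show "0 < Arg z" by linarith
  qed
qed

lemma arg_prop:
  assumes "z \<noteq> 0" "w \<noteq> 0" "Arg z = Arg w"
  shows "z = of_real (cmod z / cmod w) * w"
proof -
  have zz: "z = of_real (cmod z) * cis (Arg w)" using rcis_cmod_Arg[of z] assms(3) by (simp add: rcis_def)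
  have ww: "w = of_real (cmod w) * cis (Arg w)" using rcis_cmod_Arg[of w] by (simp add: rcis_def)
  have "of_real (cmod z / cmod w) * w = of_real (cmod z / cmod w) * (of_real (cmod w) * cis (Arg w))"
    using ww by simp
  also have "\<dots> = of_real (cmod z) * cis (Arg w)" using assms(2) by simp
  also have "\<dots> = z" using zz by simp
  finally show ?thesis by simp
qed

lemma lam_eq:
  assumes "0 < Im la" "0 < Im mu" "Arg la = Arg mu" "Arg (1 / (1 - la)) = Arg (1 / (1 - mu))"
  shows "la = mu"
proof -
  have nz: "la \<noteq> 0" "mu \<noteq> 0" "1 - la \<noteq> 0" "1 - mu \<noteq> 0" using assms(1,2) by auto
  define p where "p = cmod la / cmod mu"
  define q where "q = cmod (1 / (1 - la)) / cmod (1 / (1 - mu))"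
  have q0: "q \<noteq> 0" using nz unfolding q_def by simp
  have e1: "la = of_real p * mu" using arg_prop[OF nz(1,2) assms(3)] p_def by simp
  have "1 / (1 - la) = of_real q * (1 / (1 - mu))" using arg_prop[of "1 / (1 - la)" "1 / (1 - mu)"] assms(4) nz q_def by simp
  then have e2: "1 - mu = of_real q * (1 - la)" using nz q0 by (simp add: field_simps)
  have E: "1 - mu = of_real q - of_real (q * p) * mu" using e1 e2 by (simp add: algebra_simps)
  have r: "1 - Re mu = q - q * p * Re mu" using arg_cong[OF E, of Re] by simp
  have i: "- Im mu = - (q * p * Im mu)" using arg_cong[OF E, of Im] by simp
  from i have "q * p = 1" using assms(2) by (metis mult.commute mult_cancel_left1 neg_equal_iff_equal less_irrefl)
  with r have "q = 1" by simp
  with \<open>q * p = 1\<close> have "p = 1" by simp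
  with e1 show ?thesis by simp
qed



lemma cmod_eq_sq: "(Re x)^2 + (Im x)^2 = (Re y)^2 + (Im y)^2 \<Longrightarrow> cmod x = cmod y"
  by (simp add: cmod_def)

lemma im_div0:
  assumes "D \<noteq> 0" "Im (N / D) = 0"
  shows "Re D * Im N - Im D * Re N = 0"
proof -
  have "0 < (Re D)^2 + (Im D)^2" using assms(1) complex_neq_0 by blast
  then have "(Re D)^2 + (Im D)^2 \<noteq> 0" by linarith
  moreover have "(Im N * Re D - Re N * Im D) / ((Re D)^2 + (Im D)^2) = 0"
    using assms(2) unfolding Im_divide .
  ultimately have "Im N * Re D - Re N * Im D = 0" by (simp only: divide_eq_0_iff) blast
  then show ?thesis by (simp only: mult.commute)
qed

lemma line_gc: "d \<noteq> 0 \<Longrightarrow> gen_circle (insert None (Some ` {a + complex_of_real t * d | t. True}))"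
  unfolding gen_circle_def by (intro disjI2 exI[of _ a] exI[of _ d]) simp

lemma on_line: "x = y + complex_of_real t * d \<Longrightarrow> Some x \<in> insert None (Some ` {y + complex_of_real t * d | t. True})"
  by (intro insertI2 imageI CollectI exI[of _ t]) simp

lemma line_lemma:
  assumes "y \<noteq> z" "Im ((x - y) / (z - y)) = 0"
  shows "x = y + complex_of_real (Re ((x - y) / (z - y))) * (z - y)"
proof -
  have "(x - y) / (z - y) = complex_of_real (Re ((x - y) / (z - y)))"
    using assms(2) by (simp add: complex_eq_iff)
  then have "x - y = complex_of_real (Re ((x - y) / (z - y))) * (z - y)"
    using assms(1) by (simp add: field_simps)
  then show ?thesis by (simp add: algebra_simps)
qed

lemma sumsq_nz: "u1 \<noteq> 0 \<or> u2 \<noteq> 0 \<Longrightarrow> (u1::real)^2 + u2^2 \<noteq> 0"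
  by (metis sum_power2_eq_zero_iff)

lemma par:
  assumes "u1 \<noteq> 0 \<or> u2 \<noteq> 0" "u2 * x1 - u1 * x2 = 0"
  shows "Complex x1 x2 = complex_of_real ((x1 * u1 + x2 * u2) / (u1^2 + u2^2)) * Complex u1 u2"
proof -
  have n: "u1^2 + u2^2 \<noteq> 0" using sumsq_nz[OF assms(1)] .
  have e1: "x1 * (u1^2 + u2^2) = (x1 * u1 + x2 * u2) * u1"
    using assms(2) by (simp add: power2_eq_square algebra_simps)
  have e2: "x2 * (u1^2 + u2^2) = (x1 * u1 + x2 * u2) * u2"
    using assms(2) by (simp add: power2_eq_square algebra_simps)
  show ?thesis using n e1 e2 by (simp add: complex_eq_iff field_simps)
qed

lemma circ_pt:
  assumes "x1 * q1 + x2 * q2 = (x1^2 + x2^2) / 2"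
  shows "cmod (Complex x1 x2 - Complex q1 q2) = cmod (Complex q1 q2)"
proof (rule cmod_eq_sq)
  have e: "(x1 - q1)^2 + (x2 - q2)^2 = (q1^2 + q2^2) + (x1^2 + x2^2) - 2 * (x1 * q1 + x2 * q2)"
    by (simp add: power2_eq_square algebra_simps)
  have h: "2 * (x1 * q1 + x2 * q2) = x1^2 + x2^2" using assms by simp
  have "(x1 - q1)^2 + (x2 - q2)^2 = q1^2 + q2^2" using e h by linarith
  then show "(Re (Complex x1 x2 - Complex q1 q2))\<^sup>2 + (Im (Complex x1 x2 - Complex q1 q2))\<^sup>2 =
    (Re (Complex q1 q2))\<^sup>2 + (Im (Complex q1 q2))\<^sup>2" by simp
qed

lemma dotq:
  assumes "(d::real) \<noteq> 0" "x1 * A + x2 * B = R * d"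
  shows "x1 * (A / (2 * d)) + x2 * (B / (2 * d)) = R / 2"
proof -
  have "x1 * (A / (2 * d)) + x2 * (B / (2 * d)) = (x1 * A + x2 * B) / (2 * d)"
    by (simp add: add_divide_distrib)
  also have "\<dots> = R * d / (2 * d)" using assms(2) by simp
  also have "\<dots> = R / 2" using assms(1) by simp
  finally show ?thesis .
qed

lemma concyc_fin:
  fixes a b c l :: complex
  assumes d: "distinct [l, a, b, c]" and im: "Im ((c - a) * (b - l) / ((c - l) * (b - a))) = 0"
  shows "\<exists>C. gen_circle C \<and> {Some l, Some a, Some b, Some c} \<subseteq> C"
proof -
  define u1 where "u1 = Re (b - a)"
  define u2 where "u2 = Im (b - a)"
  define v1 where "v1 = Re (c - a)"
  define v2 where "v2 = Im (c - a)"
  define w1 where "w1 = Re (l - a)"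
  define w2 where "w2 = Im (l - a)"
  have bu: "b = a + Complex u1 u2" unfolding u1_def u2_def by (simp add: complex_eq_iff)
  have cv: "c = a + Complex v1 v2" unfolding v1_def v2_def by (simp add: complex_eq_iff)
  have lw: "l = a + Complex w1 w2" unfolding w1_def w2_def by (simp add: complex_eq_iff)
  have un: "u1 \<noteq> 0 \<or> u2 \<noteq> 0" using d bu by (auto simp: complex_eq_iff)
  have vn: "v1 \<noteq> 0 \<or> v2 \<noteq> 0" using d cv by (auto simp: complex_eq_iff)
  have wn: "w1 \<noteq> 0 \<or> w2 \<noteq> 0" using d lw by (auto simp: complex_eq_iff)
  have uv: "u1 \<noteq> v1 \<or> u2 \<noteq> v2" using d bu cv by (auto simp: complex_eq_iff)
  have uw: "u1 \<noteq> w1 \<or> u2 \<noteq> w2" using d bu lw by (auto simp: complex_eq_iff)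
  have vw: "v1 \<noteq> w1 \<or> v2 \<noteq> w2" using d cv lw by (auto simp: complex_eq_iff)
  have Dnz: "(c - l) * (b - a) \<noteq> 0" using d by auto
  note E0 = im_div0[OF Dnz im]
  define U where "U = u1^2 + u2^2"
  define V where "V = v1^2 + v2^2"
  define W where "W = w1^2 + w2^2"
  define \<delta> where "\<delta> = u1 * v2 - u2 * v1"
  have E: "W * \<delta> = U * (v2 * w1 - v1 * w2) + V * (u1 * w2 - u2 * w1)"
    using E0 unfolding bu cv lw U_def V_def W_def \<delta>_def
    by (simp add: algebra_simps power2_eq_square)
  show ?thesis
  proof (cases "\<delta> = 0")
    case False
    define q1 where "q1 = (U * v2 - V * u2) / (2 * \<delta>)"
    define q2 where "q2 = (V * u1 - U * v1) / (2 * \<delta>)"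
    have hu: "u1 * q1 + u2 * q2 = (u1^2 + u2^2) / 2"
      unfolding q1_def q2_def U_def[symmetric]
      by (rule dotq[OF False]) (simp add: \<delta>_def algebra_simps)
    have hv: "v1 * q1 + v2 * q2 = (v1^2 + v2^2) / 2"
      unfolding q1_def q2_def V_def[symmetric]
      by (rule dotq[OF False]) (simp add: \<delta>_def algebra_simps)
    have hw: "w1 * q1 + w2 * q2 = (w1^2 + w2^2) / 2"
      unfolding q1_def q2_def W_def[symmetric]
      by (rule dotq[OF False]) (use E in \<open>simp add: algebra_simps\<close>)
    define q where "q = Complex q1 q2"
    have "q \<noteq> 0"
    proof
      assume "q = 0"
      then have "q1 = 0" "q2 = 0" unfolding q_def by (simp_all add: complex_eq_iff)
      then have "u1^2 + u2^2 = 0" using hu by simp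
      then show False using sumsq_nz[OF un] by simp
    qed
    then have r: "cmod q > 0" by simp
    let ?C = "Some ` {z. cmod (z - (a + q)) = cmod q}"
    have gc: "gen_circle ?C" unfolding gen_circle_def using r by blast
    have "cmod (b - (a + q)) = cmod q" unfolding bu q_def using circ_pt[OF hu] by (simp add: algebra_simps)
    moreover have "cmod (c - (a + q)) = cmod q" unfolding cv q_def using circ_pt[OF hv] by (simp add: algebra_simps)
    moreover have "cmod (l - (a + q)) = cmod q" unfolding lw q_def using circ_pt[OF hw] by (simp add: algebra_simps)
    moreover have "cmod (a - (a + q)) = cmod q" by simp
    ultimately have "{Some l, Some a, Some b, Some c} \<subseteq> ?C" by blast
    with gc show ?thesis by blast
  next
    case True
    define k where "k = (v1 * u1 + v2 * u2) / (u1^2 + u2^2)"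
    have vk: "Complex v1 v2 = complex_of_real k * Complex u1 u2"
      unfolding k_def using par[OF un, of v1 v2] True \<delta>_def by (simp add: algebra_simps)
    then have v1k: "v1 = k * u1" and v2k: "v2 = k * u2" by (simp_all add: complex_eq_iff)
    have k0: "k \<noteq> 0" using vk vn by (auto simp: complex_eq_iff)
    have k1: "k \<noteq> 1" using vk uv by (auto simp: complex_eq_iff)
    have VU: "V = k^2 * U" unfolding V_def U_def v1k v2k by (simp add: power2_eq_square algebra_simps)
    have "0 = U * (k * (u2 * w1 - u1 * w2)) + k^2 * U * (u1 * w2 - u2 * w1)"
      using E True unfolding VU v1k v2k by (simp add: algebra_simps)
    then have "k * U * (1 - k) * (u2 * w1 - u1 * w2) = 0"
      by (simp add: algebra_simps power2_eq_square)
    moreover have "U \<noteq> 0" unfolding U_def using sumsq_nz[OF un] .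
    ultimately have I: "u2 * w1 - u1 * w2 = 0" using k0 k1 by simp
    define s where "s = (w1 * u1 + w2 * u2) / (u1^2 + u2^2)"
    have ws: "Complex w1 w2 = complex_of_real s * Complex u1 u2"
      unfolding s_def using par[OF un I] .
    have dn: "Complex u1 u2 \<noteq> 0" using un by (simp add: complex_eq_iff)
    let ?C = "insert None (Some ` {a + complex_of_real t * Complex u1 u2 | t. True})"
    have gc: "gen_circle ?C" using line_gc[OF dn] .
    have "Some a \<in> ?C" using on_line[of a a 0 "Complex u1 u2"] by simp
    moreover have "Some b \<in> ?C" using on_line[of b a 1 "Complex u1 u2"] bu by simp
    moreover have "Some c \<in> ?C" using on_line[of c a k "Complex u1 u2"] cv vk by simp
    moreover have "Some l \<in> ?C" using on_line[of l a s "Complex u1 u2"] lw ws by simp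
    ultimately show ?thesis using gc by blast
  qed
qed


lemma concyc:
  assumes d: "distinct [l, a, b, c]" and im: "Im (XR a b c l) = 0"
  shows "\<exists>C. gen_circle C \<and> {l, a, b, c} \<subseteq> C"
proof (cases l)
  case None
  then obtain a' b' c' where s: "a = Some a'" "b = Some b'" "c = Some c'" using d by (cases a; cases b; cases c) auto
  have "XR a b c l = (c' - a') / (b' - a')" unfolding s None
    by (simp add: XR_def dt_def) (metis minus_diff_eq minus_divide_divide)
  then have "c' = a' + complex_of_real (Re ((c' - a') / (b' - a'))) * (b' - a')"
    using line_lemma[of a' b' c'] im d s by auto
  moreover have "b' - a' \<noteq> 0" using d s by auto
  ultimately show ?thesis unfolding s None
    using line_gc[of "b' - a'" a'] on_line[of a' a' 0 "b' - a'"] on_line[of b' a' 1 "b' - a'"]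
       on_line[of c' a' _ "b' - a'"]
    by (intro exI[of _ "insert None (Some ` {a' + complex_of_real t * (b' - a') | t. True})"]) auto
next
  case (Some l')
  show ?thesis
  proof (cases a)
    case None
    then obtain b' c' where s: "b = Some b'" "c = Some c'" using d by (cases b; cases c) auto
    have "XR a b c l = (b' - l') / (c' - l')" unfolding s None Some
      by (simp add: XR_def dt_def) (metis minus_diff_eq minus_divide_divide)
    then have "b' = l' + complex_of_real (Re ((b' - l') / (c' - l'))) * (c' - l')"
      using line_lemma[of l' c' b'] im d s Some by auto
    moreover have "c' - l' \<noteq> 0" using d s Some by auto
    ultimately show ?thesis unfolding s None Some
      using line_gc[of "c' - l'" l'] on_line[of l' l' 0 "c' - l'"] on_line[of c' l' 1 "c' - l'"]
         on_line[of b' l' _ "c' - l'"]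
      by (intro exI[of _ "insert None (Some ` {l' + complex_of_real t * (c' - l') | t. True})"]) auto
  next
    case (Some a')
    note Sl = \<open>l = Some l'\<close>
    show ?thesis
    proof (cases b)
      case None
      then obtain c' where s: "c = Some c'" using d by (cases c) auto
      have "XR a b c l = (a' - c') / (l' - c')" unfolding s None Some Sl
        by (simp add: XR_def dt_def) (metis minus_diff_eq minus_divide_divide)
      then have "a' = c' + complex_of_real (Re ((a' - c') / (l' - c'))) * (l' - c')"
        using line_lemma[of c' l' a'] im d s Some Sl by auto
      moreover have "l' - c' \<noteq> 0" using d s Sl by auto
      ultimately show ?thesis unfolding s None Some Sl
        using line_gc[of "l' - c'" c'] on_line[of c' c' 0 "l' - c'"] on_line[of l' c' 1 "l' - c'"]
           on_line[of a' c' _ "l' - c'"]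
        by (intro exI[of _ "insert None (Some ` {c' + complex_of_real t * (l' - c') | t. True})"]) auto
    next
      case (Some b')
      note Sa = \<open>a = Some a'\<close>
      show ?thesis
      proof (cases c)
        case None
        have "XR a b c l = (l' - b') / (a' - b')" unfolding None Some Sa Sl
          by (simp add: XR_def dt_def) (metis minus_diff_eq minus_divide_divide)
        then have "l' = b' + complex_of_real (Re ((l' - b') / (a' - b'))) * (a' - b')"
          using line_lemma[of b' a' l'] im d Some Sa Sl by auto
        moreover have "a' - b' \<noteq> 0" using d Some Sa by auto
        ultimately show ?thesis unfolding None Some Sa Sl
          using line_gc[of "a' - b'" b'] on_line[of b' b' 0 "a' - b'"] on_line[of a' b' 1 "a' - b'"]
             on_line[of l' b' _ "a' - b'"]
          by (intro exI[of _ "insert None (Some ` {b' + complex_of_real t * (a' - b') | t. True})"]) auto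
      next
        case (Some c')
        have "XR a b c l = (c' - a') * (b' - l') / ((c' - l') * (b' - a'))"
          unfolding Some Sa Sl \<open>b = Some b'\<close> by (simp add: XR_def dt_def)
        then show ?thesis using concyc_fin[of l' a' b' c'] d im Some Sa Sl \<open>b = Some b'\<close> by auto
      qed
    qed
  qed
qed



lemma XR_swap: "XR a c b l = inverse (XR a b c l)"
  unfolding XR_def inverse_divide by (simp add: mult.commute)

lemma XR_rot:
  assumes d: "distinct [l, a, b, c]"
  shows "XR b c a l = 1 / (1 - XR a b c l)"
proof -
  have nz: "dt (hom c) (hom l) \<noteq> 0" "dt (hom b) (hom a) \<noteq> 0" "dt (hom l) (hom a) \<noteq> 0" "dt (hom c) (hom b) \<noteq> 0"
    using d dt_hom_eq0 by auto
  have key: "dt (hom c) (hom l) * dt (hom b) (hom a) - dt (hom c) (hom a) * dt (hom b) (hom l)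
      = dt (hom c) (hom b) * dt (hom l) (hom a)"
    by (simp add: dt_def algebra_simps)
  have "1 - XR a b c l = (dt (hom c) (hom l) * dt (hom b) (hom a) - dt (hom c) (hom a) * dt (hom b) (hom l))
      / (dt (hom c) (hom l) * dt (hom b) (hom a))"
    unfolding XR_def using nz by (simp add: field_simps)
  also have "\<dots> = dt (hom c) (hom b) * dt (hom l) (hom a) / (dt (hom c) (hom l) * dt (hom b) (hom a))"
    using key by simp
  finally have "1 / (1 - XR a b c l) = dt (hom c) (hom l) * dt (hom b) (hom a) / (dt (hom c) (hom b) * dt (hom l) (hom a))"
    by simp
  moreover have "dt (hom a) (hom b) = - dt (hom b) (hom a)" "dt (hom a) (hom l) = - dt (hom l) (hom a)"
    by (simp_all add: dt_def)
  ultimately show ?thesis unfolding XR_def by (simp add: mult.commute)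
qed

lemma Im_inv_pos: "Im z < 0 \<Longrightarrow> 0 < Im (inverse z)"
  by (simp add: Im_inverse divide_neg_pos sum_power2_gt_zero_iff)

lemma Im_rot_pos: "0 < Im z \<Longrightarrow> 0 < Im (1 / (1 - z))"
proof -
  assume h: "0 < Im z"
  have "Im (1 / (1 - z)) = Im z / ((Re (1 - z))^2 + (Im (1 - z))^2)" by (simp add: Im_divide)
  moreover have "(Re (1 - z))^2 + (Im (1 - z))^2 > 0" using h by (simp add: sum_power2_gt_zero_iff)
  ultimately show ?thesis using h by simp
qed

lemma nonreal:
  assumes "distinct [l, a, b, c]" "general_position {l, a, b, c}"
  shows "Im (XR a b c l) \<noteq> 0"
  using concyc[OF assms(1)] assms(2) unfolding general_position_def by blast

lemma get_reading:
  assumes "card P = 4" "l \<in> P"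
  obtains a b c where "P - {l} = {a, b, c}" "distinct [a, b, c]" "l \<notin> {a, b, c}" "P = {l, a, b, c}"
proof -
  have "card (P - {l}) = 3" using assms by simp
  then obtain a b c where "P - {l} = {a, b, c}" "a \<noteq> b" "b \<noteq> c" "a \<noteq> c" by (auto simp: card_3_iff)
  moreover have "l \<notin> {a, b, c}" using calculation(1) by blast
  moreover have "P = {l, a, b, c}" using calculation(1) assms(2) by blast
  ultimately show ?thesis using that by auto
qed

lemma dir2:
  assumes cP: "card P = 4" and cQ: "card Q = 4" and gP: "general_position P" and gQ: "general_position Q"
    and same: "same_shape_angles P Q"
  shows "moebius_equivalent P Q"
proof -
  obtain l where l: "l \<in> P" using cP by (metis card.empty ex_in_conv zero_neq_numeral)
  obtain l' where l': "l' \<in> Q" using cQ by (metis card.empty ex_in_conv zero_neq_numeral)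
  obtain a b c where abc: "P - {l} = {a, b, c}" "distinct [a, b, c]" "l \<notin> {a, b, c}" "P = {l, a, b, c}"
    using get_reading[OF cP l] by blast
  have nr: "Im (XR a b c l) \<noteq> 0" using nonreal[of l a b c] abc gP by simp
  obtain a0 b0 c0 where r0: "P - {l} = {a0, b0, c0}" "distinct [a0, b0, c0]" "0 < Im (XR a0 b0 c0 l)"
  proof (cases "0 < Im (XR a b c l)")
    case True then show ?thesis using that abc by blast
  next
    case False
    then have "0 < Im (XR a c b l)" using nr Im_inv_pos unfolding XR_swap[of a c b l] by simp
    moreover have "P - {l} = {a, c, b}" "distinct [a, c, b]" using abc by auto
    ultimately show ?thesis using that by blast
  qed
  have d0: "distinct [l, a0, b0, c0]" using r0 by auto
  have P0: "P = {l, a0, b0, c0}" using r0 l by blast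
  define la where "la = XR a0 b0 c0 l"
  have la_pos: "0 < Arg la" using Arg_pos_iff r0(3) la_def by simp
  have "(\<bar>Arg (XR a0 b0 c0 l)\<bar>, \<bar>Arg (XR b0 c0 a0 l)\<bar>, \<bar>Arg (XR c0 a0 b0 l)\<bar>) \<in> TA P l"
    unfolding TA_def using r0 la_pos la_def by blast
  also have "TA P l = TA Q l'" using same l l' unfolding same_shape_angles_def tri_TA by blast
  finally obtain a' b' c' where
    x: "(\<bar>Arg (XR a0 b0 c0 l)\<bar>, \<bar>Arg (XR b0 c0 a0 l)\<bar>, \<bar>Arg (XR c0 a0 b0 l)\<bar>) =
        (\<bar>Arg (XR a' b' c' l')\<bar>, \<bar>Arg (XR b' c' a' l')\<bar>, \<bar>Arg (XR c' a' b' l')\<bar>)"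
    and r1: "Q - {l'} = {a', b', c'}" "distinct [a', b', c']" "0 < Arg (XR a' b' c' l')"
    unfolding TA_def by blast
  have d1: "distinct [l', a', b', c']" using r1 by auto
  have Q1: "Q = {l', a', b', c'}" using r1 l' by blast
  define mu where "mu = XR a' b' c' l'"
  have "Im mu \<noteq> 0" using nonreal[of l' a' b' c'] d1 gQ Q1 mu_def by simp
  then have mu_pos: "0 < Im mu" using r1(3) Arg_pos_iff mu_def by simp
  have la_im: "0 < Im la" using r0(3) la_def by simp
  have e1: "Arg la = Arg mu" using x la_pos r1(3) la_def mu_def by simp
  have rot1: "XR b0 c0 a0 l = 1 / (1 - la)" using XR_rot[OF d0] la_def by simp
  have rot2: "XR b' c' a' l' = 1 / (1 - mu)" using XR_rot[OF d1] mu_def by simp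
  have p1: "0 < Arg (1 / (1 - la))" using Arg_pos_iff Im_rot_pos[OF la_im] by simp
  have p2: "0 < Arg (1 / (1 - mu))" using Arg_pos_iff Im_rot_pos[OF mu_pos] by simp
  have e2: "Arg (1 / (1 - la)) = Arg (1 / (1 - mu))" using x rot1 rot2 p1 p2 by simp
  have "la = mu" using lam_eq[OF la_im mu_pos e1 e2] .
  then obtain f where f: "is_moebius f" "f a0 = a'" "f b0 = b'" "f c0 = c'" "f l = l'"
    using moeb_exists[OF d0 d1] la_def mu_def by blast
  have "f ` P = Q" unfolding P0 Q1 using f by simp
  then show ?thesis unfolding moebius_equivalent_def using f(1) by blast
qed

theorem theorem1p6:
  fixes P Q :: "complex option set"
  assumes "card P = 4" and "card Q = 4"
    and "general_position P" and "general_position Q"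
  shows "moebius_equivalent P Q \<longleftrightarrow> same_shape_angles P Q"
  using dir1 dir2[OF assms] by blast

end
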